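(* Let $P$ and $Q$ be finite posets. If $P$ and $Q$ are both mCDE, then the direct product $P\times Q$ is mCDE.
   Context: All posets are finite. $\mathbb{E}(\mu;f)=\sum_p f(p)\mathbb{P}(\mu;p)$. $\mathrm{ddeg}(p)$ is the number of elements covered by $p$; $\mathrm{uni}$ is the uniform distribution. A $k$-chain is $c_0<\cdots<c_k$; $\mathrm{chain}(k)$ gives $p$ probability $\#\{k\text{-chains }c\ni p\}/((k+1)\#\{k\text{-chains}\})$. If $r$ is the length of a longest chain in a poset $R$, $R$ is mCDE if $\mathbb{E}(\mathrm{chain}(k)_R;\mathrm{ddeg})=\mathbb{E}(\mathrm{uni}_R;\mathrm{ddeg})$ for all $k=0,\ldots,r$. $P\times Q$ has $(p,q)\le(p',q')$ iff $p\le_P p'$ and $q\le_Q q'$. *)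

theory Defs
  imports Complex_Main
begin

definition finite_poset :: "'a set \<Rightarrow> ('a \<Rightarrow> 'a \<Rightarrow> bool) \<Rightarrow> bool" where
  "finite_poset A le \<longleftrightarrow> finite A
     \<and> (\<forall>x\<in>A. le x x)
     \<and> (\<forall>x\<in>A. \<forall>y\<in>A. le x y \<and> le y x \<longrightarrow> x = y)
     \<and> (\<forall>x\<in>A. \<forall>y\<in>A. \<forall>z\<in>A. le x y \<and> le y z \<longrightarrow> le x z)"

definition prod_le :: "('a \<Rightarrow> 'a \<Rightarrow> bool) \<Rightarrow> ('b \<Rightarrow> 'b \<Rightarrow> bool)
    \<Rightarrow> ('a \<times> 'b) \<Rightarrow> ('a \<times> 'b) \<Rightarrow> bool" where
  "prod_le le1 le2 x y \<longleftrightarrow> le1 (fst x) (fst y) \<and> le2 (snd x) (snd y)"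

definition covered_by :: "'a set \<Rightarrow> ('a \<Rightarrow> 'a \<Rightarrow> bool) \<Rightarrow> 'a \<Rightarrow> 'a \<Rightarrow> bool" where
  "covered_by A le q p \<longleftrightarrow> q \<in> A \<and> p \<in> A \<and> le q p \<and> q \<noteq> p
     \<and> \<not> (\<exists>z\<in>A. le q z \<and> z \<noteq> q \<and> le z p \<and> z \<noteq> p)"

definition ddeg :: "'a set \<Rightarrow> ('a \<Rightarrow> 'a \<Rightarrow> bool) \<Rightarrow> 'a \<Rightarrow> nat" where
  "ddeg A le p = card {q \<in> A. covered_by A le q p}"

text \<open>k-chains c_0 < ... < c_k, identified with their (totally ordered) element sets
  of cardinality k+1.\<close>

definition chains :: "'a set \<Rightarrow> ('a \<Rightarrow> 'a \<Rightarrow> bool) \<Rightarrow> nat \<Rightarrow> 'a set set" where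
  "chains A le k = {C. C \<subseteq> A \<and> finite C \<and> card C = Suc k
                        \<and> (\<forall>x\<in>C. \<forall>y\<in>C. le x y \<or> le y x)}"

definition height :: "'a set \<Rightarrow> ('a \<Rightarrow> 'a \<Rightarrow> bool) \<Rightarrow> nat" where
  "height A le = Max {k. chains A le k \<noteq> {}}"

definition prob_chain :: "'a set \<Rightarrow> ('a \<Rightarrow> 'a \<Rightarrow> bool) \<Rightarrow> nat \<Rightarrow> 'a \<Rightarrow> real" where
  "prob_chain A le k p =
     real (card {C \<in> chains A le k. p \<in> C}) / (real (Suc k) * real (card (chains A le k)))"

definition prob_uni :: "'a set \<Rightarrow> 'a \<Rightarrow> real" where
  "prob_uni A p = 1 / real (card A)"

definition expect_chain :: "'a set \<Rightarrow> ('a \<Rightarrow> 'a \<Rightarrow> bool) \<Rightarrow> nat \<Rightarrow> ('a \<Rightarrow> real) \<Rightarrow> real" where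
  "expect_chain A le k f = (\<Sum>p\<in>A. f p * prob_chain A le k p)"

definition expect_uni :: "'a set \<Rightarrow> ('a \<Rightarrow> real) \<Rightarrow> real" where
  "expect_uni A f = (\<Sum>p\<in>A. f p * prob_uni A p)"

text \<open>mCDE. The poset must be nonempty for the uniform distribution (and the
  longest chain length) to make sense.\<close>

definition mCDE :: "'a set \<Rightarrow> ('a \<Rightarrow> 'a \<Rightarrow> bool) \<Rightarrow> bool" where
  "mCDE A le \<longleftrightarrow> A \<noteq> {} \<and>
     (\<forall>k \<le> height A le.
        expect_chain A le k (\<lambda>p. real (ddeg A le p)) = expect_uni A (\<lambda>p. real (ddeg A le p)))"

end

theory Submission
  imports Defs
begin


lemma vand: "(\<Sum>i\<le>k. (i choose a) * ((k - i) choose b)) = Suc k choose (a + b + 1)"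
proof (induction k arbitrary: b)
  case 0
  then show ?case by (cases a; cases b) auto
next
  case (Suc k)
  show ?case
  proof (cases b)
    case 0
    have h: "(\<Sum>i\<le>Suc k. (i choose a)) = Suc (Suc k) choose Suc a" by (rule sum_choose_upper)
    show ?thesis using 0 h by (simp del: binomial_Suc_Suc sum.atMost_Suc)
  next
    case (Suc b')
    have "(\<Sum>i\<le>Suc k. (i choose a) * ((Suc k - i) choose b))
        = (\<Sum>i\<le>k. (i choose a) * ((Suc k - i) choose b))"
      using Suc by (simp add: sum.atMost_Suc)
    also have "\<dots> = (\<Sum>i\<le>k. (i choose a) * ((k - i) choose b') + (i choose a) * ((k - i) choose b))"
      by (rule sum.cong) (auto simp: Suc Suc_diff_le algebra_simps)
    also have "\<dots> = (\<Sum>i\<le>k. (i choose a) * ((k - i) choose b')) + (\<Sum>i\<le>k. (i choose a) * ((k - i) choose b))"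
      by (simp add: sum.distrib)
    also have "\<dots> = (Suc k choose (a + b' + 1)) + (Suc k choose (a + b + 1))"
      using Suc.IH by simp
    also have "\<dots> = Suc (Suc k) choose (a + b + 1)"
      using Suc by simp
    finally show ?thesis .
  qed
qed

lemma conv:
  fixes s t :: "nat \<Rightarrow> real"
  shows "(\<Sum>i\<le>k. (\<Sum>a\<le>i. real (i choose a) * s a) * (\<Sum>b\<le>k-i. real ((k-i) choose b) * t b))
       = (\<Sum>j\<le>k. real (Suc k choose Suc j) * (\<Sum>a\<le>j. s a * t (j - a)))"
proof -
  have e1: "(\<Sum>a\<le>i. real (i choose a) * s a) = (\<Sum>a\<le>k. real (i choose a) * s a)" if "i \<le> k" for i
    by (rule sum.mono_neutral_left) (use that in auto)
  have e2: "(\<Sum>b\<le>k-i. real ((k-i) choose b) * t b) = (\<Sum>b\<le>k. real ((k-i) choose b) * t b)" for i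
    by (rule sum.mono_neutral_left) auto
  have "(\<Sum>i\<le>k. (\<Sum>a\<le>i. real (i choose a) * s a) * (\<Sum>b\<le>k-i. real ((k-i) choose b) * t b))
     = (\<Sum>i\<le>k. \<Sum>a\<le>k. \<Sum>b\<le>k. real (i choose a) * real ((k-i) choose b) * (s a * t b))"
    apply (rule sum.cong, simp)
    subgoal for i by (subst e1, simp, subst e2, simp add: sum_product algebra_simps)
    done
  also have "\<dots> = (\<Sum>a\<le>k. \<Sum>b\<le>k. \<Sum>i\<le>k. real (i choose a) * real ((k-i) choose b) * (s a * t b))"
    apply (rule trans, rule sum.swap)
    apply (rule sum.cong[OF refl], rule sum.swap)
    done
  also have "\<dots> = (\<Sum>a\<le>k. \<Sum>b\<le>k. real (Suc k choose (a + b + 1)) * (s a * t b))"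
  proof -
    have "(\<Sum>i\<le>k. real (i choose a) * real ((k-i) choose b) * (s a * t b)) = real (Suc k choose (a + b + 1)) * (s a * t b)" for a b
    proof -
      have "(\<Sum>i\<le>k. real (i choose a) * real ((k-i) choose b) * (s a * t b))
          = real (\<Sum>i\<le>k. (i choose a) * ((k - i) choose b)) * (s a * t b)"
        by (simp add: sum_distrib_right)
      then show ?thesis by (simp add: vand)
    qed
    then show ?thesis by simp
  qed
  also have "\<dots> = (\<Sum>(a,b)\<in>{..k}\<times>{..k}. real (Suc k choose (a + b + 1)) * (s a * t b))"
    by (simp add: sum.cartesian_product)
  also have "\<dots> = (\<Sum>(a,b)\<in>{(a,b). a + b \<le> k}. real (Suc k choose (a + b + 1)) * (s a * t b))"
    by (rule sum.mono_neutral_right) (auto simp del: binomial_Suc_Suc simp: binomial_eq_0)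
  also have "\<dots> = (\<Sum>j\<le>k. \<Sum>a\<le>j. real (Suc k choose (a + (j - a) + 1)) * (s a * t (j - a)))"
    by (rule sum.triangle_reindex_eq)
  also have "\<dots> = (\<Sum>j\<le>k. real (Suc k choose Suc j) * (\<Sum>a\<le>j. s a * t (j - a)))"
    by (auto intro!: sum.cong simp: sum_distrib_left)
  finally show ?thesis .
qed



definition SD :: "'a set \<Rightarrow> ('a \<Rightarrow> 'a \<Rightarrow> bool) \<Rightarrow> nat \<Rightarrow> 'a \<Rightarrow> 'a set set" where
  "SD A le i p = {C \<in> chains A le i. p \<in> C \<and> (\<forall>x\<in>C. le x p)}"

lemma max_exists:
  assumes po: "finite_poset A le" and "finite S" "S \<noteq> {}" "S \<subseteq> A"
    and tot: "\<forall>x\<in>S. \<forall>y\<in>S. le x y \<or> le y x"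
  shows "\<exists>m\<in>S. \<forall>x\<in>S. le x m"
  using assms(2,3,4,5)
proof (induction S rule: finite_ne_induct)
  case (singleton x)
  then show ?case using po unfolding finite_poset_def by auto
next
  case (insert x F)
  then obtain m where m: "m \<in> F" "\<forall>y\<in>F. le y m" by auto
  show ?case
  proof (cases "le m x")
    case True
    have "\<forall>y\<in>insert x F. le y x"
    proof
      fix y assume "y \<in> insert x F"
      then show "le y x"
      proof
        assume "y = x" then show ?thesis using po insert.prems unfolding finite_poset_def by auto
      next
        assume "y \<in> F"
        then have "le y m" using m by auto
        then show ?thesis using True po insert.prems m \<open>y \<in> F\<close> unfolding finite_poset_def by blast
      qed
    qed
    then show ?thesis by auto
  next
    case False
    then have "le x m" using insert.prems m by auto
    then show ?thesis using m by auto
  qed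
qed

lemma finite_chains: "finite A \<Longrightarrow> finite (chains A le k)"
  by (rule finite_subset[of _ "Pow A"]) (auto simp: chains_def)

lemma finite_SD: "finite A \<Longrightarrow> finite (SD A le k p)"
  by (rule finite_subset[of _ "chains A le k"]) (auto simp: SD_def finite_chains)

lemma SD_0:
  assumes po: "finite_poset A le" and p: "p \<in> A"
  shows "SD A le 0 p = {{p}}"
proof -
  have "C = {p}" if "C \<in> SD A le 0 p" for C
    using that by (auto simp: SD_def chains_def card_Suc_eq)
  moreover have "{p} \<in> SD A le 0 p"
    using po p by (auto simp: SD_def chains_def finite_poset_def)
  ultimately show ?thesis by blast
qed

lemma SD_Suc:
  assumes po: "finite_poset A le" and p: "p \<in> A"
  shows "card (SD A le (Suc i) p) = (\<Sum>q\<in>{q\<in>A. le q p \<and> q \<noteq> p}. card (SD A le i q))"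
proof -
  let ?Qs = "{q\<in>A. le q p \<and> q \<noteq> p}"
  have fin: "finite A" using po by (simp add: finite_poset_def)
  have refl: "\<And>x. x \<in> A \<Longrightarrow> le x x" and antis: "\<And>x y. x \<in> A \<Longrightarrow> y \<in> A \<Longrightarrow> le x y \<Longrightarrow> le y x \<Longrightarrow> x = y"
    and trans: "\<And>x y z. x \<in> A \<Longrightarrow> y \<in> A \<Longrightarrow> z \<in> A \<Longrightarrow> le x y \<Longrightarrow> le y z \<Longrightarrow> le x z"
    using po unfolding finite_poset_def by blast+
  have pnot: "p \<notin> D" if "D \<in> (\<Union>q\<in>?Qs. SD A le i q)" for D
  proof
    assume "p \<in> D"
    from that obtain q where q: "q \<in> ?Qs" "D \<in> SD A le i q" by auto
    then have "le p q" using \<open>p \<in> D\<close> by (auto simp: SD_def)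
    then show False using q antis p by auto
  qed
  have eq: "SD A le (Suc i) p = insert p ` (\<Union>q\<in>?Qs. SD A le i q)"
  proof
    show "SD A le (Suc i) p \<subseteq> insert p ` (\<Union>q\<in>?Qs. SD A le i q)"
    proof
      fix C assume C: "C \<in> SD A le (Suc i) p"
      then have CA: "C \<subseteq> A" and fC: "finite C" and cC: "card C = Suc (Suc i)"
        and tC: "\<forall>x\<in>C. \<forall>y\<in>C. le x y \<or> le y x" and pC: "p \<in> C" and bC: "\<forall>x\<in>C. le x p"
        by (auto simp: SD_def chains_def)
      let ?D = "C - {p}"
      have cD: "card ?D = Suc i" using cC pC fC by simp
      then have "?D \<noteq> {}" by (metis card.empty nat.simps(3))
      then obtain q where q: "q \<in> ?D" "\<forall>x\<in>?D. le x q"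
        using max_exists[OF po, of ?D] fC CA tC by auto
      have "q \<in> ?Qs" using q CA bC by auto
      moreover have "?D \<in> SD A le i q"
        using q CA fC cD tC by (auto simp: SD_def chains_def)
      moreover have "C = insert p ?D" using pC by auto
      ultimately show "C \<in> insert p ` (\<Union>q\<in>?Qs. SD A le i q)" by blast
    qed
  next
    show "insert p ` (\<Union>q\<in>?Qs. SD A le i q) \<subseteq> SD A le (Suc i) p"
    proof
      fix C assume "C \<in> insert p ` (\<Union>q\<in>?Qs. SD A le i q)"
      then obtain D q where D: "D \<in> SD A le i q" and q: "q \<in> ?Qs" and C: "C = insert p D" by auto
      have pD: "p \<notin> D" using pnot D q by auto
      have DA: "D \<subseteq> A" and fD: "finite D" and cD: "card D = Suc i"
        and tD: "\<forall>x\<in>D. \<forall>y\<in>D. le x y \<or> le y x" and bD: "\<forall>x\<in>D. le x q"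
        using D by (auto simp: SD_def chains_def)
      have bp: "\<forall>x\<in>D. le x p"
        using bD q DA trans p by blast
      show "C \<in> SD A le (Suc i) p"
        unfolding SD_def chains_def C using DA fD cD tD bp pD p refl
        by (auto simp: card_insert_if)
    qed
  qed
  have inj: "inj_on (insert p) (\<Union>q\<in>?Qs. SD A le i q)"
  proof (rule inj_onI)
    fix D D' assume "D \<in> (\<Union>q\<in>?Qs. SD A le i q)" "D' \<in> (\<Union>q\<in>?Qs. SD A le i q)" "insert p D = insert p D'"
    then show "D = D'" using pnot by (metis Diff_insert_absorb)
  qed
  have disj: "\<forall>q\<in>?Qs. \<forall>q'\<in>?Qs. q \<noteq> q' \<longrightarrow> SD A le i q \<inter> SD A le i q' = {}"
  proof (intro ballI impI)
    fix q q' assume q: "q \<in> ?Qs" and q': "q' \<in> ?Qs" and ne: "q \<noteq> q'"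
    show "SD A le i q \<inter> SD A le i q' = {}"
    proof (rule ccontr)
      assume "SD A le i q \<inter> SD A le i q' \<noteq> {}"
      then obtain D where "D \<in> SD A le i q" "D \<in> SD A le i q'" by blast
      then have "le q q'" "le q' q" by (auto simp: SD_def)
      then show False using antis q q' ne by auto
    qed
  qed
  have "card (SD A le (Suc i) p) = card (\<Union>q\<in>?Qs. SD A le i q)"
    unfolding eq by (rule card_image[OF inj])
  also have "\<dots> = (\<Sum>q\<in>?Qs. card (SD A le i q))"
    by (rule card_UN_disjoint) (use fin disj finite_SD in auto)
  finally show ?thesis .
qed



primrec md :: "'a set \<Rightarrow> ('a \<Rightarrow> 'a \<Rightarrow> bool) \<Rightarrow> nat \<Rightarrow> 'a \<Rightarrow> real" where
  "md A le 0 p = 1"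
| "md A le (Suc i) p = (\<Sum>q\<in>{q\<in>A. le q p}. md A le i q)"

definition dual :: "('a \<Rightarrow> 'a \<Rightarrow> bool) \<Rightarrow> 'a \<Rightarrow> 'a \<Rightarrow> bool" where
  "dual le x y = le y x"

lemma dual_apply[simp]: "dual le x y = le y x" by (simp add: dual_def)

lemma poset_dual: "finite_poset A le \<Longrightarrow> finite_poset A (dual le)"
  unfolding finite_poset_def dual_def by blast

lemma chains_dual: "chains A (dual le) k = chains A le k"
  unfolding chains_def dual_def by blast
lemma pascal_sum:
  fixes x :: "nat \<Rightarrow> real"
  shows "(\<Sum>a\<le>Suc i. real (Suc i choose a) * x a) = (\<Sum>a\<le>i. real (i choose a) * x a) + (\<Sum>a\<le>i. real (i choose a) * x (Suc a))"
proof -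
  have "(\<Sum>a\<le>Suc i. real (Suc i choose a) * x a) = real (Suc i choose 0) * x 0 + (\<Sum>a\<le>i. real (Suc i choose Suc a) * x (Suc a))"
    by (rule sum.atMost_Suc_shift)
  also have "(\<Sum>a\<le>i. real (Suc i choose Suc a) * x (Suc a)) = (\<Sum>a\<le>i. real (i choose Suc a) * x (Suc a) + real (i choose a) * x (Suc a))"
    by (rule sum.cong) (simp_all add: distrib_right)
  also have "\<dots> = (\<Sum>a\<le>i. real (i choose Suc a) * x (Suc a)) + (\<Sum>a\<le>i. real (i choose a) * x (Suc a))"
    by (rule sum.distrib)
  finally have 1: "(\<Sum>a\<le>Suc i. real (Suc i choose a) * x a) = x 0 + (\<Sum>a\<le>i. real (i choose Suc a) * x (Suc a)) + (\<Sum>a\<le>i. real (i choose a) * x (Suc a))"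
    by simp
  have 2: "(\<Sum>a\<le>Suc i. real (i choose a) * x a) = real (i choose 0) * x 0 + (\<Sum>a\<le>i. real (i choose Suc a) * x (Suc a))"
    by (rule sum.atMost_Suc_shift)
  have 3: "(\<Sum>a\<le>Suc i. real (i choose a) * x a) = (\<Sum>a\<le>i. real (i choose a) * x a)"
    by (simp add: sum.atMost_Suc)
  show ?thesis using 1 2 3 by simp
qed

lemma md_SD:
  assumes po: "finite_poset A le"
  shows "p \<in> A \<Longrightarrow> md A le i p = (\<Sum>a\<le>i. real (i choose a) * real (card (SD A le a p)))"
proof (induction i arbitrary: p)
  case 0
  then show ?case using SD_0[OF po] by simp
next
  case (Suc i)
  let ?Qs = "{q\<in>A. le q p \<and> q \<noteq> p}"
  have fin: "finite A" using po by (simp add: finite_poset_def)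
  have set: "{q\<in>A. le q p} = insert p ?Qs" using po Suc.prems unfolding finite_poset_def by auto
  have "md A le (Suc i) p = md A le i p + (\<Sum>q\<in>?Qs. md A le i q)"
    by (simp only: md.simps set, subst sum.insert) (use fin in auto)
  also have "(\<Sum>q\<in>?Qs. md A le i q) = (\<Sum>q\<in>?Qs. \<Sum>a\<le>i. real (i choose a) * real (card (SD A le a q)))"
    by (rule sum.cong) (auto intro: Suc.IH)
  also have "\<dots> = (\<Sum>a\<le>i. real (i choose a) * real (\<Sum>q\<in>?Qs. card (SD A le a q)))"
    by (subst sum.swap) (simp add: sum_distrib_left)
  also have "\<dots> = (\<Sum>a\<le>i. real (i choose a) * real (card (SD A le (Suc a) p)))"
    using SD_Suc[OF po Suc.prems] by simp
  finally show ?case using Suc.IH[OF Suc.prems] pascal_sum[of i "\<lambda>a. real (card (SD A le a p))"]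
    by (simp del: sum.atMost_Suc)
qed



lemma chains_through:
  assumes po: "finite_poset A le" and p: "p \<in> A"
  shows "card {C\<in>chains A le k. p\<in>C} = (\<Sum>i\<le>k. card (SD A le i p) * card (SD A (dual le) (k-i) p))"
proof -
  have fin: "finite A" using po by (simp add: finite_poset_def)
  have refl: "\<And>x. x \<in> A \<Longrightarrow> le x x" and antis: "\<And>x y. x \<in> A \<Longrightarrow> y \<in> A \<Longrightarrow> le x y \<Longrightarrow> le y x \<Longrightarrow> x = y"
    and trans: "\<And>x y z. x \<in> A \<Longrightarrow> y \<in> A \<Longrightarrow> z \<in> A \<Longrightarrow> le x y \<Longrightarrow> le y z \<Longrightarrow> le x z"
    using po unfolding finite_poset_def by blast+
  define S where "S i = SD A le i p \<times> SD A (dual le) (k-i) p" for i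
  have memS: "(L,U) \<in> S i \<longleftrightarrow> L \<subseteq> A \<and> finite L \<and> card L = Suc i \<and> (\<forall>x\<in>L. \<forall>y\<in>L. le x y \<or> le y x)
      \<and> p \<in> L \<and> (\<forall>x\<in>L. le x p) \<and>
      U \<subseteq> A \<and> finite U \<and> card U = Suc (k - i) \<and> (\<forall>x\<in>U. \<forall>y\<in>U. le x y \<or> le y x)
      \<and> p \<in> U \<and> (\<forall>x\<in>U. le p x)" for L U i
    unfolding S_def SD_def chains_def by auto
  have inter: "L \<inter> U = {p}" if "(L,U) \<in> S i" for L U i
    using that memS[of L U i] antis by blast
  have recL: "L = {x \<in> L \<union> U. le x p}" if "(L,U) \<in> S i" for L U i
    using that memS[of L U i] antis by blast
  have recU: "U = {x \<in> L \<union> U. le p x}" if "(L,U) \<in> S i" for L U i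
    using that memS[of L U i] antis by blast
  have eq: "{C\<in>chains A le k. p\<in>C} = (\<lambda>(L,U). L \<union> U) ` (\<Union>i\<in>{..k}. S i)"
  proof
    show "{C\<in>chains A le k. p\<in>C} \<subseteq> (\<lambda>(L,U). L \<union> U) ` (\<Union>i\<in>{..k}. S i)"
    proof
      fix C assume "C \<in> {C\<in>chains A le k. p\<in>C}"
      then have CA: "C \<subseteq> A" and fC: "finite C" and cC: "card C = Suc k"
        and tC: "\<forall>x\<in>C. \<forall>y\<in>C. le x y \<or> le y x" and pC: "p \<in> C"
        by (auto simp: chains_def)
      define L where "L = {x \<in> C. le x p}"
      define U where "U = {x \<in> C. le p x}"
      have LU: "L \<union> U = C" using tC pC unfolding L_def U_def by blast
      have LiU: "L \<inter> U = {p}" using pC CA refl antis unfolding L_def U_def by blast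
      have fL: "finite L" and fU: "finite U" using fC unfolding L_def U_def by auto
      have "card L \<noteq> 0" using fL pC refl CA unfolding L_def by auto
      then obtain i where ci: "card L = Suc i" using not0_implies_Suc by blast
      have "card L + card U = card C + 1"
        using card_Un_Int[OF fL fU] LU LiU by simp
      moreover have "card U \<noteq> 0" using fU pC refl CA unfolding U_def by auto
      ultimately have cU: "card U = Suc (k - i)" and ik: "i \<le> k"
        using ci cC by auto
      have "(L,U) \<in> S i"
        unfolding memS using CA fL fU ci cU tC pC refl unfolding L_def U_def by auto
      then show "C \<in> (\<lambda>(L,U). L \<union> U) ` (\<Union>i\<in>{..k}. S i)"
        using ik LU by force
    qed
  next
    show "(\<lambda>(L,U). L \<union> U) ` (\<Union>i\<in>{..k}. S i) \<subseteq> {C\<in>chains A le k. p\<in>C}"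
    proof
      fix C assume "C \<in> (\<lambda>(L,U). L \<union> U) ` (\<Union>i\<in>{..k}. S i)"
      then obtain L U i where LU: "(L,U) \<in> S i" and ik: "i \<le> k" and C: "C = L \<union> U" by auto
      note m = LU[unfolded memS]
      have "card (L \<union> U) + card (L \<inter> U) = card L + card U"
        using card_Un_Int[of L U] m by simp
      then have cC: "card C = Suc k" using inter[OF LU] m ik C by simp
      have tC: "\<forall>x\<in>C. \<forall>y\<in>C. le x y \<or> le y x"
      proof (intro ballI)
        fix x y assume "x \<in> C" "y \<in> C"
        then consider "x \<in> L" "y \<in> L" | "x \<in> U" "y \<in> U" | "x \<in> L" "y \<in> U" | "x \<in> U" "y \<in> L"
          using C by blast
        then show "le x y \<or> le y x"
        proof cases
          case 3 then show ?thesis using m trans p by blast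
        next
          case 4 then show ?thesis using m trans p by blast
        qed (use m in blast)+
      qed
      show "C \<in> {C\<in>chains A le k. p\<in>C}"
        unfolding chains_def using m C cC tC by auto
    qed
  qed
  have inj: "inj_on (\<lambda>(L,U). L \<union> U) (\<Union>i\<in>{..k}. S i)"
  proof (rule inj_onI, clarify)
    fix L U L' U' i j
    assume a: "(L,U) \<in> S i" "(L',U') \<in> S j" "L \<union> U = L' \<union> U'"
    show "L = L' \<and> U = U'"
      using recL[OF a(1)] recL[OF a(2)] recU[OF a(1)] recU[OF a(2)] a(3) by metis
  qed
  have disj: "\<forall>i\<in>{..k}. \<forall>j\<in>{..k}. i \<noteq> j \<longrightarrow> S i \<inter> S j = {}"
  proof (intro ballI impI)
    fix i j :: nat assume "i \<noteq> j"
    then show "S i \<inter> S j = {}" using memS by auto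
  qed
  have finS: "finite (S i)" for i
    unfolding S_def using finite_SD[OF fin] by (simp add: finite_cartesian_product)
  have "card {C\<in>chains A le k. p\<in>C} = card (\<Union>i\<in>{..k}. S i)"
    unfolding eq by (rule card_image[OF inj])
  also have "\<dots> = (\<Sum>i\<le>k. card (S i))"
    by (rule card_UN_disjoint) (use disj finS in auto)
  also have "\<dots> = (\<Sum>i\<le>k. card (SD A le i p) * card (SD A (dual le) (k-i) p))"
    unfolding S_def by (simp add: card_cartesian_product)
  finally show ?thesis .
qed



definition Fc :: "'a set \<Rightarrow> ('a \<Rightarrow> 'a \<Rightarrow> bool) \<Rightarrow> nat \<Rightarrow> 'a \<Rightarrow> real" where
  "Fc A le k p = real (card {C\<in>chains A le k. p\<in>C})"

definition G :: "'a set \<Rightarrow> ('a \<Rightarrow> 'a \<Rightarrow> bool) \<Rightarrow> nat \<Rightarrow> 'a \<Rightarrow> real" where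
  "G A le k p = (\<Sum>i\<le>k. md A le i p * md A (dual le) (k-i) p)"

lemma G_Fc:
  assumes po: "finite_poset A le" and p: "p \<in> A"
  shows "G A le k p = (\<Sum>j\<le>k. real (Suc k choose Suc j) * Fc A le j p)"
proof -
  define s where "s a = real (card (SD A le a p))" for a
  define t where "t b = real (card (SD A (dual le) b p))" for b
  have "G A le k p = (\<Sum>i\<le>k. (\<Sum>a\<le>i. real (i choose a) * s a) * (\<Sum>b\<le>k-i. real ((k-i) choose b) * t b))"
    unfolding G_def s_def t_def using md_SD[OF po p] md_SD[OF poset_dual[OF po] p] by simp
  also have "\<dots> = (\<Sum>j\<le>k. real (Suc k choose Suc j) * (\<Sum>a\<le>j. s a * t (j - a)))"
    by (rule conv)
  also have "\<dots> = (\<Sum>j\<le>k. real (Suc k choose Suc j) * Fc A le j p)"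
    unfolding Fc_def s_def t_def chains_through[OF po p] by simp
  finally show ?thesis .
qed

lemma G_sum:
  assumes po: "finite_poset A le"
  shows "(\<Sum>p\<in>A. h p * G A le k p) = (\<Sum>j\<le>k. real (Suc k choose Suc j) * (\<Sum>p\<in>A. h p * Fc A le j p))"
proof -
  have "(\<Sum>p\<in>A. h p * G A le k p) = (\<Sum>p\<in>A. \<Sum>j\<le>k. real (Suc k choose Suc j) * (h p * Fc A le j p))"
    by (rule sum.cong) (auto simp: G_Fc[OF po] sum_distrib_left algebra_simps)
  also have "\<dots> = (\<Sum>j\<le>k. real (Suc k choose Suc j) * (\<Sum>p\<in>A. h p * Fc A le j p))"
    by (subst sum.swap) (simp add: sum_distrib_left)
  finally show ?thesis .
qed

lemma F_iff_G:
  assumes po: "finite_poset A le"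
  shows "(\<forall>k. (\<Sum>p\<in>A. h p * Fc A le k p) = 0) \<longleftrightarrow> (\<forall>k. (\<Sum>p\<in>A. h p * G A le k p) = 0)"
proof
  assume "\<forall>k. (\<Sum>p\<in>A. h p * Fc A le k p) = 0"
  then show "\<forall>k. (\<Sum>p\<in>A. h p * G A le k p) = 0" by (simp add: G_sum[OF po])
next
  assume H: "\<forall>k. (\<Sum>p\<in>A. h p * G A le k p) = 0"
  show "\<forall>k. (\<Sum>p\<in>A. h p * Fc A le k p) = 0"
  proof
    fix k show "(\<Sum>p\<in>A. h p * Fc A le k p) = 0"
    proof (induction k rule: less_induct)
      case (less k)
      have "0 = (\<Sum>j\<le>k. real (Suc k choose Suc j) * (\<Sum>p\<in>A. h p * Fc A le j p))"
        using H G_sum[OF po] by metis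
      also have "\<dots> = (\<Sum>j<k. real (Suc k choose Suc j) * (\<Sum>p\<in>A. h p * Fc A le j p)) + (\<Sum>p\<in>A. h p * Fc A le k p)"
        by (simp add: lessThan_Suc_atMost[symmetric])
      also have "(\<Sum>j<k. real (Suc k choose Suc j) * (\<Sum>p\<in>A. h p * Fc A le j p)) = 0"
        using less.IH by simp
      finally show ?case by simp
    qed
  qed
qed



lemma sum_Fc:
  assumes fin: "finite A"
  shows "(\<Sum>p\<in>A. Fc A le k p) = real (Suc k) * real (card (chains A le k))"
proof -
  let ?Ch = "chains A le k"
  have fCh: "finite ?Ch" using finite_chains[OF fin] .
  have "(\<Sum>p\<in>A. Fc A le k p) = (\<Sum>p\<in>A. \<Sum>C\<in>?Ch. if p \<in> C then 1 else 0)"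
  proof (rule sum.cong[OF refl])
    fix p
    have "real (card {C\<in>?Ch. p\<in>C}) = (\<Sum>C\<in>{C\<in>?Ch. p\<in>C}. 1)" by simp
    also have "\<dots> = (\<Sum>C\<in>?Ch. if p \<in> C then 1 else 0)"
      by (rule sum.inter_filter[OF fCh])
    finally show "Fc A le k p = (\<Sum>C\<in>?Ch. if p \<in> C then 1 else 0)" unfolding Fc_def .
  qed
  also have "\<dots> = (\<Sum>C\<in>?Ch. \<Sum>p\<in>A. if p \<in> C then 1 else 0)"
    by (rule sum.swap)
  also have "\<dots> = (\<Sum>C\<in>?Ch. real (Suc k))"
  proof (rule sum.cong[OF refl])
    fix C assume C: "C \<in> ?Ch"
    then have "C \<subseteq> A" "card C = Suc k" by (auto simp: chains_def)
    have "(\<Sum>p\<in>A. if p \<in> C then 1 else 0) = (\<Sum>p\<in>{p\<in>A. p\<in>C}. (1::real))"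
      by (rule sum.inter_filter[OF fin, symmetric])
    also have "{p\<in>A. p\<in>C} = C" using \<open>C \<subseteq> A\<close> by auto
    finally show "(\<Sum>p\<in>A. if p \<in> C then 1 else 0) = real (Suc k)" using \<open>card C = Suc k\<close> by simp
  qed
  also have "\<dots> = real (Suc k) * real (card ?Ch)" by simp
  finally show ?thesis .
qed

lemma chains_sub:
  assumes "C \<in> chains A le k'" "k \<le> k'"
  shows "chains A le k \<noteq> {}"
proof -
  have "Suc k \<le> card C" using assms by (auto simp: chains_def)
  then obtain T where "T \<subseteq> C" "card T = Suc k" "finite T" by (rule obtain_subset_with_card_n)
  then have "T \<in> chains A le k" using assms(1) by (auto simp: chains_def)
  then show ?thesis by auto
qed

lemma height_facts:
  assumes po: "finite_poset A le" and ne: "A \<noteq> {}"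
  shows "k \<le> height A le \<Longrightarrow> chains A le k \<noteq> {}"
    and "height A le < k \<Longrightarrow> chains A le k = {}"
proof -
  have fin: "finite A" using po by (simp add: finite_poset_def)
  let ?K = "{k. chains A le k \<noteq> {}}"
  have Kb: "?K \<subseteq> {..card A}"
  proof
    fix k assume "k \<in> ?K"
    then obtain C where "C \<in> chains A le k" by auto
    then have "C \<subseteq> A" "card C = Suc k" by (auto simp: chains_def)
    then have "Suc k \<le> card A" using card_mono[OF fin] by metis
    then show "k \<in> {..card A}" by simp
  qed
  have fK: "finite ?K" using Kb finite_subset by blast
  obtain p where p: "p \<in> A" using ne by auto
  have "{p} \<in> chains A le 0" using p po by (auto simp: chains_def finite_poset_def)
  then have K0: "0 \<in> ?K" by auto
  then have hK: "height A le \<in> ?K" unfolding height_def using fK by (intro Max_in) auto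
  show "k \<le> height A le \<Longrightarrow> chains A le k \<noteq> {}"
    using hK chains_sub by blast
  show "height A le < k \<Longrightarrow> chains A le k = {}"
  proof (rule ccontr)
    assume "height A le < k" "chains A le k \<noteq> {}"
    then have "k \<le> height A le" unfolding height_def using fK by (intro Max_ge) auto
    then show False using \<open>height A le < k\<close> by simp
  qed
qed

definition mu0 :: "'a set \<Rightarrow> ('a \<Rightarrow> 'a \<Rightarrow> bool) \<Rightarrow> real" where
  "mu0 A le = (\<Sum>p\<in>A. real (ddeg A le p)) / real (card A)"

lemma mCDE_iff:
  assumes po: "finite_poset A le" and ne: "A \<noteq> {}"
  shows "mCDE A le \<longleftrightarrow> (\<forall>k. (\<Sum>p\<in>A. (real (ddeg A le p) - mu0 A le) * Fc A le k p) = 0)"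
proof -
  have fin: "finite A" using po by (simp add: finite_poset_def)
  let ?f = "\<lambda>p. real (ddeg A le p)"
  let ?mu = "mu0 A le"
  have uni: "expect_uni A ?f = ?mu"
    unfolding expect_uni_def prob_uni_def mu0_def by (simp add: sum_divide_distrib)
  have EC: "expect_chain A le k ?f = (\<Sum>p\<in>A. ?f p * Fc A le k p) / (real (Suc k) * real (card (chains A le k)))" for k
    unfolding expect_chain_def prob_chain_def Fc_def by (simp add: sum_divide_distrib)
  have split: "(\<Sum>p\<in>A. (?f p - ?mu) * Fc A le k p) = (\<Sum>p\<in>A. ?f p * Fc A le k p) - ?mu * (real (Suc k) * real (card (chains A le k)))" for k
    using sum_Fc[OF fin, of le k] by (simp add: left_diff_distrib sum_subtractf flip: sum_distrib_left)
  have key: "expect_chain A le k ?f = expect_uni A ?f \<longleftrightarrow> (\<Sum>p\<in>A. (?f p - ?mu) * Fc A le k p) = 0"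
    if "chains A le k \<noteq> {}" for k
  proof -
    have "card (chains A le k) \<noteq> 0" using that finite_chains[OF fin] by auto
    then have D: "real (Suc k) * real (card (chains A le k)) \<noteq> 0" by simp
    show ?thesis unfolding EC uni split using D by (simp add: field_simps)
  qed
  have key0: "(\<Sum>p\<in>A. (?f p - ?mu) * Fc A le k p) = 0" if "chains A le k = {}" for k
    unfolding Fc_def using that by simp
  show ?thesis
  proof
    assume m: "mCDE A le"
    show "\<forall>k. (\<Sum>p\<in>A. (?f p - ?mu) * Fc A le k p) = 0"
    proof
      fix k show "(\<Sum>p\<in>A. (?f p - ?mu) * Fc A le k p) = 0"
      proof (cases "k \<le> height A le")
        case True
        then show ?thesis using key[OF height_facts(1)[OF po ne True]] m unfolding mCDE_def by auto
      next
        case False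
        then show ?thesis using key0 height_facts(2)[OF po ne] by simp
      qed
    qed
  next
    assume H: "\<forall>k. (\<Sum>p\<in>A. (?f p - ?mu) * Fc A le k p) = 0"
    show "mCDE A le" unfolding mCDE_def using ne H key height_facts(1)[OF po ne] by blast
  qed
qed



declare dual_apply[simp del]

lemma poset_prod:
  assumes "finite_poset P leP" "finite_poset Q leQ"
  shows "finite_poset (P \<times> Q) (prod_le leP leQ)"
proof -
  have fP: "finite P" and rP: "\<forall>x\<in>P. leP x x" and aP: "\<forall>x\<in>P. \<forall>y\<in>P. leP x y \<and> leP y x \<longrightarrow> x = y"
    and tP: "\<forall>x\<in>P. \<forall>y\<in>P. \<forall>z\<in>P. leP x y \<and> leP y z \<longrightarrow> leP x z"
    using assms(1) unfolding finite_poset_def by blast+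
  have fQ: "finite Q" and rQ: "\<forall>x\<in>Q. leQ x x" and aQ: "\<forall>x\<in>Q. \<forall>y\<in>Q. leQ x y \<and> leQ y x \<longrightarrow> x = y"
    and tQ: "\<forall>x\<in>Q. \<forall>y\<in>Q. \<forall>z\<in>Q. leQ x y \<and> leQ y z \<longrightarrow> leQ x z"
    using assms(2) unfolding finite_poset_def by blast+
  show ?thesis unfolding finite_poset_def
  proof (intro conjI ballI impI)
    show "finite (P \<times> Q)" using fP fQ by simp
  next
    fix x assume "x \<in> P \<times> Q" then show "prod_le leP leQ x x" using rP rQ by (auto simp: prod_le_def)
  next
    fix x y assume "x \<in> P \<times> Q" "y \<in> P \<times> Q" "prod_le leP leQ x y \<and> prod_le leP leQ y x"
    then show "x = y" using aP aQ unfolding prod_le_def by (metis mem_Times_iff prod_eqI)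
  next
    fix x y z assume "x \<in> P \<times> Q" "y \<in> P \<times> Q" "z \<in> P \<times> Q" "prod_le leP leQ x y \<and> prod_le leP leQ y z"
    then have "fst x \<in> P" "fst y \<in> P" "fst z \<in> P" "snd x \<in> Q" "snd y \<in> Q" "snd z \<in> Q"
      "leP (fst x) (fst y)" "leP (fst y) (fst z)" "leQ (snd x) (snd y)" "leQ (snd y) (snd z)"
      unfolding prod_le_def by auto
    then show "prod_le leP leQ x z" using tP tQ unfolding prod_le_def by blast
  qed
qed

lemma dual_prod: "dual (prod_le leP leQ) = prod_le (dual leP) (dual leQ)"
  by (auto simp: fun_eq_iff prod_le_def dual_apply)

lemma md_prod:
  assumes "p \<in> P" "q \<in> Q"
  shows "md (P \<times> Q) (prod_le leP leQ) i (p,q) = md P leP i p * md Q leQ i q"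
  using assms
proof (induction i arbitrary: p q)
  case 0
  then show ?case by simp
next
  case (Suc i)
  have set: "{z\<in>P \<times> Q. prod_le leP leQ z (p,q)} = {p'\<in>P. leP p' p} \<times> {q'\<in>Q. leQ q' q}"
    by (auto simp: prod_le_def)
  have "md (P \<times> Q) (prod_le leP leQ) (Suc i) (p,q) = (\<Sum>z\<in>{p'\<in>P. leP p' p} \<times> {q'\<in>Q. leQ q' q}. md P leP i (fst z) * md Q leQ i (snd z))"
    unfolding md.simps set by (rule sum.cong) (auto simp: Suc.IH)
  also have "\<dots> = md P leP (Suc i) p * md Q leQ (Suc i) q"
    by (simp add: sum_product sum.cartesian_product case_prod_unfold)
  finally show ?case .
qed

lemma shift:
  assumes fin: "finite Q"
  shows "(\<Sum>q\<in>Q. md Q le (Suc i) q * md Q (dual le) j q) = (\<Sum>q\<in>Q. md Q le i q * md Q (dual le) (Suc j) q)"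
proof -
  have "(\<Sum>q\<in>Q. md Q le (Suc i) q * md Q (dual le) j q) = (\<Sum>q\<in>Q. \<Sum>q'\<in>Q. if le q' q then md Q le i q' * md Q (dual le) j q else 0)"
    unfolding md.simps sum.inter_filter[OF fin] sum_distrib_right by (intro sum.cong refl) auto
  also have "\<dots> = (\<Sum>q'\<in>Q. \<Sum>q\<in>Q. if le q' q then md Q le i q' * md Q (dual le) j q else 0)"
    by (rule sum.swap)
  also have "\<dots> = (\<Sum>q\<in>Q. md Q le i q * md Q (dual le) (Suc j) q)"
    unfolding md.simps sum.inter_filter[OF fin] sum_distrib_left by (intro sum.cong refl) (auto simp: dual_apply)
  finally show ?thesis .
qed

lemma shift_const:
  assumes fin: "finite Q"
  shows "i \<le> k \<Longrightarrow> (\<Sum>q\<in>Q. md Q le i q * md Q (dual le) (k - i) q) = (\<Sum>q\<in>Q. md Q (dual le) k q)"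
proof (induction i)
  case 0
  then show ?case by simp
next
  case (Suc i)
  have e: "k - i = Suc (k - Suc i)" using Suc.prems by simp
  have "(\<Sum>q\<in>Q. md Q le (Suc i) q * md Q (dual le) (k - Suc i) q) = (\<Sum>q\<in>Q. md Q le i q * md Q (dual le) (k - i) q)"
    unfolding e by (rule shift[OF fin])
  then show ?case using Suc.IH Suc.prems by (simp del: md.simps)
qed

lemma G_prod:
  assumes "p \<in> P" "q \<in> Q"
  shows "G (P \<times> Q) (prod_le leP leQ) k (p,q) =
    (\<Sum>i\<le>k. (md P leP i p * md P (dual leP) (k-i) p) * (md Q leQ i q * md Q (dual leQ) (k-i) q))"
  unfolding G_def dual_prod using md_prod[OF assms] by (simp add: algebra_simps)

lemma factor_sum:
  fixes a :: "nat \<Rightarrow> 'x \<Rightarrow> real" and b :: "nat \<Rightarrow> 'y \<Rightarrow> real"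
  assumes "finite P" "finite Q" and c: "\<And>i. i \<le> k \<Longrightarrow> (\<Sum>q\<in>Q. b i q) = c"
  shows "(\<Sum>p\<in>P. \<Sum>q\<in>Q. f p * (\<Sum>i\<le>k. a i p * b i q)) = c * (\<Sum>p\<in>P. f p * (\<Sum>i\<le>k. a i p))"
proof -
  have "(\<Sum>p\<in>P. \<Sum>q\<in>Q. f p * (\<Sum>i\<le>k. a i p * b i q)) = (\<Sum>p\<in>P. f p * (\<Sum>i\<le>k. a i p * (\<Sum>q\<in>Q. b i q)))"
  proof (rule sum.cong[OF refl])
    fix p
    have "(\<Sum>q\<in>Q. f p * (\<Sum>i\<le>k. a i p * b i q)) = f p * (\<Sum>q\<in>Q. \<Sum>i\<le>k. a i p * b i q)"
      by (rule sum_distrib_left[symmetric])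
    also have "(\<Sum>q\<in>Q. \<Sum>i\<le>k. a i p * b i q) = (\<Sum>i\<le>k. \<Sum>q\<in>Q. a i p * b i q)"
      by (rule sum.swap)
    also have "\<dots> = (\<Sum>i\<le>k. a i p * (\<Sum>q\<in>Q. b i q))"
      by (simp add: sum_distrib_left)
    finally show "(\<Sum>q\<in>Q. f p * (\<Sum>i\<le>k. a i p * b i q)) = f p * (\<Sum>i\<le>k. a i p * (\<Sum>q\<in>Q. b i q))" .
  qed
  also have "\<dots> = (\<Sum>p\<in>P. f p * (\<Sum>i\<le>k. a i p * c))"
    using c by simp
  also have "\<dots> = (\<Sum>p\<in>P. c * (f p * (\<Sum>i\<le>k. a i p)))"
    by (rule sum.cong[OF refl]) (simp add: sum_distrib_left mult_ac)
  finally show ?thesis by (simp add: sum_distrib_left)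
qed



lemma cover_prod:
  assumes poP: "finite_poset P leP" and poQ: "finite_poset Q leQ" and p: "p \<in> P" and q: "q \<in> Q"
  shows "covered_by (P \<times> Q) (prod_le leP leQ) (p',q') (p,q) \<longleftrightarrow>
     (covered_by P leP p' p \<and> q' = q) \<or> (p' = p \<and> covered_by Q leQ q' q)"
proof -
  have rP: "\<And>x. x \<in> P \<Longrightarrow> leP x x" and aP: "\<And>x y. x \<in> P \<Longrightarrow> y \<in> P \<Longrightarrow> leP x y \<Longrightarrow> leP y x \<Longrightarrow> x = y"
    using poP unfolding finite_poset_def by blast+
  have rQ: "\<And>x. x \<in> Q \<Longrightarrow> leQ x x" and aQ: "\<And>x y. x \<in> Q \<Longrightarrow> y \<in> Q \<Longrightarrow> leQ x y \<Longrightarrow> leQ y x \<Longrightarrow> x = y"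
    using poQ unfolding finite_poset_def by blast+
  show ?thesis
  proof
    assume c: "covered_by (P \<times> Q) (prod_le leP leQ) (p',q') (p,q)"
    then have p': "p' \<in> P" and q': "q' \<in> Q" and lp: "leP p' p" and lq: "leQ q' q" and ne: "(p',q') \<noteq> (p,q)"
      unfolding covered_by_def prod_le_def by auto
    have nz: "\<And>z. z \<in> P \<times> Q \<Longrightarrow> prod_le leP leQ (p',q') z \<Longrightarrow> z \<noteq> (p',q') \<Longrightarrow> prod_le leP leQ z (p,q) \<Longrightarrow> z = (p,q)"
      using c unfolding covered_by_def by blast
    consider "p' \<noteq> p" "q' \<noteq> q" | "q' = q" | "p' = p" by blast
    then show "(covered_by P leP p' p \<and> q' = q) \<or> (p' = p \<and> covered_by Q leQ q' q)"
    proof cases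
      case 1
      have "(p',q) = (p,q)" using nz[of "(p',q)"] p' q rP[OF p'] lq lp rQ[OF q] 1 unfolding prod_le_def by auto
      then show ?thesis using 1 by simp
    next
      case 2
      have "covered_by P leP p' p"
        unfolding covered_by_def
      proof (intro conjI p' p lp notI)
        show "p' = p \<Longrightarrow> False" using ne 2 by simp
      next
        assume "\<exists>z\<in>P. leP p' z \<and> z \<noteq> p' \<and> leP z p \<and> z \<noteq> p"
        then obtain z where "z \<in> P" "leP p' z" "z \<noteq> p'" "leP z p" "z \<noteq> p" by blast
        then show False using nz[of "(z,q)"] q rQ[OF q] 2 unfolding prod_le_def by auto
      qed
      then show ?thesis using 2 by simp
    next
      case 3
      have "covered_by Q leQ q' q"
        unfolding covered_by_def
      proof (intro conjI q' q lq notI)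
        show "q' = q \<Longrightarrow> False" using ne 3 by simp
      next
        assume "\<exists>z\<in>Q. leQ q' z \<and> z \<noteq> q' \<and> leQ z q \<and> z \<noteq> q"
        then obtain z where "z \<in> Q" "leQ q' z" "z \<noteq> q'" "leQ z q" "z \<noteq> q" by blast
        then show False using nz[of "(p,z)"] p rP[OF p] 3 unfolding prod_le_def by auto
      qed
      then show ?thesis using 3 by simp
    qed
  next
    assume "(covered_by P leP p' p \<and> q' = q) \<or> (p' = p \<and> covered_by Q leQ q' q)"
    then show "covered_by (P \<times> Q) (prod_le leP leQ) (p',q') (p,q)"
    proof
      assume a: "covered_by P leP p' p \<and> q' = q"
      then have p': "p' \<in> P" and lp: "leP p' p" and ne: "p' \<noteq> p" and q': "q' = q"
        and nz: "\<And>z. z \<in> P \<Longrightarrow> leP p' z \<Longrightarrow> z \<noteq> p' \<Longrightarrow> leP z p \<Longrightarrow> z = p"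
        unfolding covered_by_def by auto
      show ?thesis unfolding covered_by_def
      proof (intro conjI notI)
        assume "\<exists>z\<in>P \<times> Q. prod_le leP leQ (p', q') z \<and> z \<noteq> (p', q') \<and> prod_le leP leQ z (p, q) \<and> z \<noteq> (p, q)"
        then obtain z w where zw: "z \<in> P" "w \<in> Q" "leP p' z" "leQ q w" "(z,w) \<noteq> (p',q)" "leP z p" "leQ w q" "(z,w) \<noteq> (p,q)"
          unfolding prod_le_def q' by auto
        have "w = q" using aQ[OF zw(2) q zw(7) zw(4)] .
        then show False using nz[OF zw(1) zw(3)] zw by auto
      qed (use p' p q q' lp ne rQ in \<open>auto simp: prod_le_def\<close>)
    next
      assume a: "p' = p \<and> covered_by Q leQ q' q"
      then have q': "q' \<in> Q" and lq: "leQ q' q" and ne: "q' \<noteq> q" and p': "p' = p"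
        and nz: "\<And>z. z \<in> Q \<Longrightarrow> leQ q' z \<Longrightarrow> z \<noteq> q' \<Longrightarrow> leQ z q \<Longrightarrow> z = q"
        unfolding covered_by_def by auto
      show ?thesis unfolding covered_by_def
      proof (intro conjI notI)
        assume "\<exists>z\<in>P \<times> Q. prod_le leP leQ (p', q') z \<and> z \<noteq> (p', q') \<and> prod_le leP leQ z (p, q) \<and> z \<noteq> (p, q)"
        then obtain z w where zw: "z \<in> P" "w \<in> Q" "leP p z" "leQ q' w" "(z,w) \<noteq> (p,q')" "leP z p" "leQ w q" "(z,w) \<noteq> (p,q)"
          unfolding prod_le_def p' by auto
        have "z = p" using aP[OF zw(1) p zw(6) zw(3)] .
        then show False using nz[OF zw(2) zw(4)] zw by auto
      qed (use p' p q q' lq ne rP in \<open>auto simp: prod_le_def\<close>)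
    qed
  qed
qed

lemma ddeg_prod:
  assumes poP: "finite_poset P leP" and poQ: "finite_poset Q leQ" and p: "p \<in> P" and q: "q \<in> Q"
  shows "ddeg (P \<times> Q) (prod_le leP leQ) (p,q) = ddeg P leP p + ddeg Q leQ q"
proof -
  have fP: "finite P" and fQ: "finite Q" using poP poQ by (auto simp: finite_poset_def)
  let ?A = "{p'\<in>P. covered_by P leP p' p} \<times> {q}"
  let ?B = "{p} \<times> {q'\<in>Q. covered_by Q leQ q' q}"
  have eq: "{z\<in>P \<times> Q. covered_by (P \<times> Q) (prod_le leP leQ) z (p,q)} = ?A \<union> ?B"
  proof -
    have "z \<in> {z\<in>P \<times> Q. covered_by (P \<times> Q) (prod_le leP leQ) z (p,q)} \<longleftrightarrow> z \<in> ?A \<union> ?B" for z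
    proof (cases z)
      case (Pair a b)
      then show ?thesis using cover_prod[OF poP poQ p q, of a b] p q
        by (auto simp: covered_by_def)
    qed
    then show ?thesis by blast
  qed
  have disj: "?A \<inter> ?B = {}" by (auto simp: covered_by_def)
  have "card (?A \<union> ?B) = card ?A + card ?B"
    by (rule card_Un_disjoint) (use fP fQ disj in auto)
  also have "\<dots> = ddeg P leP p + ddeg Q leQ q"
    unfolding ddeg_def by (simp add: card_cartesian_product)
  finally show ?thesis unfolding ddeg_def eq .
qed



lemma mu0_prod:
  assumes poP: "finite_poset P leP" and poQ: "finite_poset Q leQ" and neP: "P \<noteq> {}" and neQ: "Q \<noteq> {}"
  shows "mu0 (P \<times> Q) (prod_le leP leQ) = mu0 P leP + mu0 Q leQ"
proof -
  have fP: "finite P" and fQ: "finite Q" using poP poQ by (auto simp: finite_poset_def)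
  have cP: "real (card P) \<noteq> 0" and cQ: "real (card Q) \<noteq> 0" using fP fQ neP neQ by auto
  have "(\<Sum>z\<in>P \<times> Q. real (ddeg (P \<times> Q) (prod_le leP leQ) z)) = (\<Sum>p\<in>P. \<Sum>q\<in>Q. real (ddeg P leP p) + real (ddeg Q leQ q))"
    by (subst sum.cartesian_product) (intro sum.cong refl, auto simp: ddeg_prod[OF poP poQ])
  also have "\<dots> = real (card Q) * (\<Sum>p\<in>P. real (ddeg P leP p)) + real (card P) * (\<Sum>q\<in>Q. real (ddeg Q leQ q))"
    by (simp add: sum.distrib sum_distrib_left sum.swap[of _ Q] mult.commute)
  finally show ?thesis unfolding mu0_def using cP cQ
    by (simp add: card_cartesian_product field_simps)
qed

theorem proposition2p9:
  fixes P :: "'a set" and leP :: "'a \<Rightarrow> 'a \<Rightarrow> bool"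
    and Q :: "'b set" and leQ :: "'b \<Rightarrow> 'b \<Rightarrow> bool"
  assumes "finite_poset P leP" and "finite_poset Q leQ"
    and "mCDE P leP" and "mCDE Q leQ"
  shows "mCDE (P \<times> Q) (prod_le leP leQ)"
proof -
  note poP = assms(1) and poQ = assms(2)
  have fP: "finite P" and fQ: "finite Q" using poP poQ by (auto simp: finite_poset_def)
  have neP: "P \<noteq> {}" and neQ: "Q \<noteq> {}" using assms(3,4) by (auto simp: mCDE_def)
  define h1 where "h1 p = real (ddeg P leP p) - mu0 P leP" for p
  define h2 where "h2 q = real (ddeg Q leQ q) - mu0 Q leQ" for q
  have "\<forall>k. (\<Sum>p\<in>P. h1 p * Fc P leP k p) = 0"
    using assms(3) mCDE_iff[OF poP neP] unfolding h1_def by blast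
  then have GP: "\<forall>k. (\<Sum>p\<in>P. h1 p * G P leP k p) = 0"
    using F_iff_G[OF poP, of h1] by blast
  have "\<forall>k. (\<Sum>q\<in>Q. h2 q * Fc Q leQ k q) = 0"
    using assms(4) mCDE_iff[OF poQ neQ] unfolding h2_def by blast
  then have GQ: "\<forall>k. (\<Sum>q\<in>Q. h2 q * G Q leQ k q) = 0"
    using F_iff_G[OF poQ, of h2] by blast
  have poPQ: "finite_poset (P \<times> Q) (prod_le leP leQ)" by (rule poset_prod[OF poP poQ])
  have nePQ: "P \<times> Q \<noteq> {}" using neP neQ by auto
  define a where "a k i p = md P leP i p * md P (dual leP) (k-i) p" for k i :: nat and p
  define b where "b k i q = md Q leQ i q * md Q (dual leQ) (k-i) q" for k i :: nat and q
  have main: "(\<Sum>z\<in>P \<times> Q. (real (ddeg (P \<times> Q) (prod_le leP leQ) z) - mu0 (P \<times> Q) (prod_le leP leQ)) * G (P \<times> Q) (prod_le leP leQ) k z) = 0" for k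
  proof -
    have "(\<Sum>z\<in>P \<times> Q. (real (ddeg (P \<times> Q) (prod_le leP leQ) z) - mu0 (P \<times> Q) (prod_le leP leQ)) * G (P \<times> Q) (prod_le leP leQ) k z)
       = (\<Sum>p\<in>P. \<Sum>q\<in>Q. (h1 p + h2 q) * (\<Sum>i\<le>k. a k i p * b k i q))"
      by (subst sum.cartesian_product) (intro sum.cong refl, auto simp: ddeg_prod[OF poP poQ] mu0_prod[OF poP poQ neP neQ] G_prod a_def b_def h1_def h2_def)
    also have "\<dots> = (\<Sum>p\<in>P. \<Sum>q\<in>Q. h1 p * (\<Sum>i\<le>k. a k i p * b k i q)) + (\<Sum>p\<in>P. \<Sum>q\<in>Q. h2 q * (\<Sum>i\<le>k. a k i p * b k i q))"
      by (simp add: distrib_right sum.distrib)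
    also have "(\<Sum>p\<in>P. \<Sum>q\<in>Q. h1 p * (\<Sum>i\<le>k. a k i p * b k i q)) = (\<Sum>q\<in>Q. md Q (dual leQ) k q) * (\<Sum>p\<in>P. h1 p * (\<Sum>i\<le>k. a k i p))"
      by (rule factor_sum[OF fP fQ]) (simp add: b_def shift_const[OF fQ])
    also have "(\<Sum>p\<in>P. h1 p * (\<Sum>i\<le>k. a k i p)) = 0"
      using GP unfolding G_def a_def by simp
    also have "(\<Sum>p\<in>P. \<Sum>q\<in>Q. h2 q * (\<Sum>i\<le>k. a k i p * b k i q)) = (\<Sum>q\<in>Q. \<Sum>p\<in>P. h2 q * (\<Sum>i\<le>k. b k i q * a k i p))"
      by (subst sum.swap) (simp add: mult.commute)
    also have "\<dots> = (\<Sum>p\<in>P. md P (dual leP) k p) * (\<Sum>q\<in>Q. h2 q * (\<Sum>i\<le>k. b k i q))"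
      by (rule factor_sum[OF fQ fP]) (simp add: a_def shift_const[OF fP])
    also have "(\<Sum>q\<in>Q. h2 q * (\<Sum>i\<le>k. b k i q)) = 0"
      using GQ unfolding G_def b_def by simp
    finally show ?thesis by simp
  qed
  show ?thesis
    unfolding mCDE_iff[OF poPQ nePQ] F_iff_G[OF poPQ] using main by blast
qed

end
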